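(* Let $q=2^f\geq 4$ and let $I=\{0,\ f,\ 2f/\gcd(3,f),\ 4f/\gcd(3,f)\}$. Let $b\in\mathbb{F}_{q^2}^\times$ satisfy $b+b^q=1$ and $b^{q+1}\neq 1$. Then there exists an element $a\in\mathbb{F}_{q^2}^\times$ of order $q+1$ such that (1) $(1+b+b^2)^{2^i}\neq a+a^{-1}+1$ for every $i\in I$; (2) $(1+b+b^2)^{2^i}\neq a(1+b+b^3+b^4)+a^{-1}(b^2+b^3+b^4)$ for every $i\in I$; (3) $a+a^{-1}+1\neq a(1+b+b^3+b^4)+a^{-1}(b^2+b^3+b^4)$; (4) $a+a^{-1}+1\neq 0$. *)

theory Defs
  imports Main
begin

definition mult_order :: "'a::field \<Rightarrow> nat" where
  "mult_order x = (if \<exists>n>0. x ^ n = 1 then (LEAST n. 0 < n \<and> x ^ n = 1) else 0)"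

end

theory Submission
  imports Defs "HOL-Decision_Procs.Algebra_Aux" "HOL-Algebra.Multiplicative_Group" "HOL-Number_Theory.Totient"
begin


lemma gen_exists: "\<exists>g::'a::{field,finite}. \<forall>x. x \<noteq> 0 \<longrightarrow> (\<exists>i::nat. x = g^i)"
proof -
  have "finite (carrier (cring_class_ops::'a ring))" by (simp add: cring_class_ops_def)
  from field.finite_field_mult_group_has_gen[OF field_class this]
  obtain a::'a where "carrier (mult_of cring_class_ops) = {a [^]\<^bsub>cring_class_ops\<^esub> i | i::nat. i \<in> UNIV}" by blast
  then have "carrier (mult_of cring_class_ops) = {a ^ i | i::nat. i \<in> UNIV}" by (simp only: power_class)
  then have "UNIV - {0} = {a ^ i | i::nat. i \<in> UNIV}" by (simp add: cring_class_ops_def)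
  then show ?thesis by blast
qed

lemma char2:
  assumes "card (UNIV::'a::{field,finite} set) = 2 ^ k" "k > 0"
  shows "(2::'a) = 0"
proof -
  have "(\<Sum>y\<in>(UNIV::'a set). y + 1) = (\<Sum>y\<in>UNIV. y)"
    by (rule sum.reindex_bij_witness[of _ "\<lambda>y. y - 1" "\<lambda>y. y + 1"]) auto
  then have "of_nat (card (UNIV::'a set)) = (0::'a)" by (simp add: sum.distrib)
  then have "(2::'a) ^ k = 0" using assms(1) by simp
  then show ?thesis by simp
qed

lemma fermat:
  fixes x :: "'a::{field,finite}"
  assumes "x \<noteq> 0"
  shows "x ^ (card (UNIV::'a set) - 1) = 1"
proof -
  let ?U = "UNIV - {0::'a}"
  have "(\<Prod>y\<in>?U. x * y) = (\<Prod>y\<in>?U. y)"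
    by (rule prod.reindex_bij_witness[of _ "\<lambda>y. y / x" "\<lambda>y. x * y"]) (use assms in auto)
  moreover have "(\<Prod>y\<in>?U. x * y) = x ^ card ?U * (\<Prod>y\<in>?U. y)"
    by (simp add: prod.distrib)
  moreover have "card ?U = card (UNIV::'a set) - 1" by (simp add: card_Diff_singleton)
  moreover have "(\<Prod>y\<in>?U. y) \<noteq> 0" by simp
  ultimately show ?thesis by (metis mult_cancel_right2)
qed

lemma pow_gcd_one:
  fixes x :: "'a::field"
  assumes "x ^ m = 1" "x ^ n = 1"
  shows "x ^ gcd m n = 1"
proof (cases "m = 0")
  case True then show ?thesis using assms by simp
next
  case False
  then obtain u v where uv: "m * u = n * v + gcd m n" using bezout_nat by blast
  have "x ^ (m * u) = 1" using assms by (simp add: power_mult)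
  moreover have "x ^ (m * u) = x ^ gcd m n"
    using uv assms by (simp add: power_add power_mult)
  ultimately show ?thesis by simp
qed

lemma mult_order_eqI:
  fixes y :: "'a::field"
  assumes "0 < n" "\<And>m. y ^ m = 1 \<longleftrightarrow> n dvd m"
  shows "mult_order y = n"
proof -
  have ex: "\<exists>n>0. y ^ n = 1" using assms by auto
  have "(LEAST m. 0 < m \<and> y ^ m = 1) = n"
    by (rule Least_equality) (use assms in \<open>auto intro: dvd_imp_le\<close>)
  then show ?thesis using ex by (simp add: mult_order_def)
qed

lemma mult_order_le:
  fixes y :: "'a::field"
  assumes "0 < m" "y ^ m = 1"
  shows "mult_order y \<le> m"
proof -
  have ex: "\<exists>n>0. y ^ n = 1" using assms by auto
  have "(LEAST m. 0 < m \<and> y ^ m = 1) \<le> m" by (rule Least_le) (use assms in auto)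
  then show ?thesis using ex by (simp add: mult_order_def)
qed

lemma frob2:
  fixes x y :: "'a::comm_ring_1"
  assumes "(2::'a) = 0"
  shows "(x + y) ^ (2 ^ k) = x ^ (2 ^ k) + y ^ (2 ^ k)"
proof (induction k)
  case 0 then show ?case by simp
next
  case (Suc k)
  have "(x + y) ^ (2 ^ Suc k) = ((x + y) ^ (2 ^ k)) ^ 2" by (simp add: power_mult[symmetric] mult.commute)
  also have "\<dots> = (x ^ (2 ^ k) + y ^ (2 ^ k)) ^ 2" using Suc by simp
  also have "\<dots> = (x ^ (2 ^ k)) ^ 2 + (y ^ (2 ^ k)) ^ 2 + 2 * x ^ (2 ^ k) * y ^ (2 ^ k)"
    by (simp add: power2_eq_square algebra_simps)
  also have "\<dots> = x ^ (2 ^ Suc k) + y ^ (2 ^ Suc k)"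
    using assms by (simp add: power_mult[symmetric] mult.commute)
  finally show ?case .
qed

definition QR :: "'a::field \<Rightarrow> 'a \<Rightarrow> 'a \<Rightarrow> 'a set" where
  "QR \<alpha> \<beta> \<gamma> = {x. \<alpha> * x ^ 2 + \<beta> * x + \<gamma> = 0}"

lemma QR_card:
  fixes \<alpha> \<beta> \<gamma> :: "'a::field"
  assumes "\<alpha> \<noteq> 0 \<or> \<beta> \<noteq> 0"
  shows "card (QR \<alpha> \<beta> \<gamma>) \<le> 2"
proof -
  have "\<exists>u v. QR \<alpha> \<beta> \<gamma> \<subseteq> {u, v}"
  proof (cases "\<alpha> = 0")
    case True
    with assms have "\<beta> \<noteq> 0" by simp
    have "QR \<alpha> \<beta> \<gamma> \<subseteq> {- \<gamma> / \<beta>, - \<gamma> / \<beta>}"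
    proof
      fix x assume "x \<in> QR \<alpha> \<beta> \<gamma>"
      then have "\<beta> * x = - \<gamma>" using True by (simp add: QR_def eq_neg_iff_add_eq_0)
      moreover have "x = (\<beta> * x) / \<beta>" using \<open>\<beta> \<noteq> 0\<close> by simp
      ultimately have "x = - \<gamma> / \<beta>" by simp
      then show "x \<in> {- \<gamma> / \<beta>, - \<gamma> / \<beta>}" by simp
    qed
    then show ?thesis by blast
  next
    case False
    show ?thesis
    proof (cases "QR \<alpha> \<beta> \<gamma> = {}")
      case True then show ?thesis by blast
    next
      case nonempty: False
      then obtain r where r: "r \<in> QR \<alpha> \<beta> \<gamma>" by blast
      have "QR \<alpha> \<beta> \<gamma> \<subseteq> {r, - \<beta> / \<alpha> - r}"
      proof
        fix s assume s: "s \<in> QR \<alpha> \<beta> \<gamma>"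
        have "(s - r) * (\<alpha> * (s + r) + \<beta>) = (\<alpha> * s^2 + \<beta>*s + \<gamma>) - (\<alpha> * r^2 + \<beta> * r + \<gamma>)"
          by (simp add: power2_eq_square algebra_simps)
        also have "\<dots> = 0" using r s by (simp add: QR_def)
        finally have "(s - r) * (\<alpha> * (s + r) + \<beta>) = 0" .
        then have "s = r \<or> \<alpha> * (s + r) + \<beta> = 0" by simp
        moreover have "\<alpha> * (s + r) + \<beta> = 0 \<Longrightarrow> s = - \<beta> / \<alpha> - r"
        proof -
          assume "\<alpha> * (s + r) + \<beta> = 0"
          then have "\<alpha> * (s + r) = - \<beta>" by (simp add: eq_neg_iff_add_eq_0)
          moreover have "s + r = (\<alpha> * (s + r)) / \<alpha>" using False by simp
          ultimately have "s + r = - \<beta> / \<alpha>" by simp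
          then show ?thesis by (simp add: algebra_simps)
        qed
        ultimately show "s \<in> {r, - \<beta> / \<alpha> - r}" by blast
      qed
      then show ?thesis by blast
    qed
  qed
  then obtain u v where "QR \<alpha> \<beta> \<gamma> \<subseteq> {u, v}" by blast
  then have "card (QR \<alpha> \<beta> \<gamma>) \<le> card {u, v}" by (rule card_mono[rotated]) simp
  also have "\<dots> \<le> 2" by (simp add: card_insert_if)
  finally show ?thesis .
qed


lemma totient_lb:
  assumes "1 \<le> f"
  shows "2 * f \<le> totient (2 ^ f + 1)"
proof -
  define n where "n = (2::nat) ^ f + 1"
  have oddn: "odd n" using assms by (simp add: n_def)
  define T1 where "T1 = (\<lambda>j. (2::nat) ^ j) ` {..f}"
  define T2 where "T2 = (\<lambda>j. n - 2 ^ j) ` {1..<f}"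
  have le: "\<And>j. j \<le> f \<Longrightarrow> (2::nat) ^ j \<le> n"
    using n_def by (metis le_add1 le_trans power_increasing one_le_numeral)
  have cop: "\<And>j. coprime ((2::nat) ^ j) n" using oddn by (simp add: coprime_left_2_iff_odd)
  have "T1 \<subseteq> totatives n"
    using le cop by (auto simp: T1_def in_totatives_iff)
  moreover have "T2 \<subseteq> totatives n"
  proof
    fix x assume "x \<in> T2"
    then obtain j where j: "1 \<le> j" "j < f" "x = n - 2 ^ j" by (auto simp: T2_def)
    have "2 ^ j < (2::nat) ^ f" using j by simp
    then have "0 < x" "x \<le> n" using j unfolding n_def by linarith+
    moreover have "gcd x n = gcd (2 ^ j) n" using j le[of j] by (simp add: gcd_diff2_nat)
    then have "coprime x n" using cop[of j] by (simp add: coprime_iff_gcd_eq_1)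
    ultimately show "x \<in> totatives n" by (simp add: in_totatives_iff)
  qed
  moreover have "T1 \<inter> T2 = {}"
  proof (rule ccontr)
    assume "T1 \<inter> T2 \<noteq> {}"
    then obtain i j where ij: "i \<le> f" "1 \<le> j" "j < f" "(2::nat) ^ i = n - 2 ^ j"
      by (auto simp: T1_def T2_def)
    have "2 ^ j < (2::nat) ^ f" using ij by simp
    then have eq: "(2::nat) ^ i + 2 ^ j = 2 ^ f + 1" using ij(4) unfolding n_def by linarith
    show False
    proof (cases i)
      case 0 then have "(2::nat) ^ j = 2 ^ f" using eq by simp
      then show False using ij by simp
    next
      case (Suc i')
      have "even ((2::nat) ^ i + 2 ^ j)" using Suc ij(2) by simp
      moreover have "odd ((2::nat) ^ f + 1)" using assms by simp
      ultimately show False using eq by simp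
    qed
  qed
  moreover have "card T1 = f + 1"
    unfolding T1_def by (subst card_image) (auto simp: inj_on_def)
  moreover have "card T2 = f - 1"
  proof -
    have "inj_on (\<lambda>j. n - 2 ^ j) {1..<f}"
    proof (rule inj_onI)
      fix x y assume "x \<in> {1..<f}" "y \<in> {1..<f}" "n - 2 ^ x = n - (2::nat) ^ y"
      moreover have "(2::nat) ^ x \<le> n" "(2::nat) ^ y \<le> n" using le calculation by auto
      ultimately have "(2::nat) ^ x = 2 ^ y" by linarith
      then show "x = y" by simp
    qed
    then show ?thesis unfolding T2_def by (simp add: card_image)
  qed
  ultimately have "card (T1 \<union> T2) = 2 * f" "T1 \<union> T2 \<subseteq> totatives n"
    using assms by (simp_all add: card_Un_disjoint T1_def T2_def)
  then have "2 * f \<le> card (totatives n)" by (metis card_mono finite_totatives)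
  then show ?thesis by (simp add: totient_def n_def)
qed

theorem lemma3p1:
  fixes f :: nat and b :: "'a::{field,finite}"
  assumes card: "card (UNIV :: 'a set) = (2 ^ f) ^ 2"
    and q4: "2 ^ f \<ge> (4::nat)"
    and b0: "b \<noteq> 0"
    and btr: "b + b ^ (2 ^ f) = 1"
    and bn: "b ^ (2 ^ f + 1) \<noteq> 1"
  shows "\<exists>a::'a. a \<noteq> 0 \<and> mult_order a = 2 ^ f + 1 \<and>
    (\<forall>i \<in> {0, f, 2 * f div gcd 3 f, 4 * f div gcd 3 f}.
        (1 + b + b ^ 2) ^ (2 ^ i) \<noteq> a + inverse a + 1) \<and>
    (\<forall>i \<in> {0, f, 2 * f div gcd 3 f, 4 * f div gcd 3 f}.
        (1 + b + b ^ 2) ^ (2 ^ i) \<noteq>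
          a * (1 + b + b ^ 3 + b ^ 4) + inverse a * (b ^ 2 + b ^ 3 + b ^ 4)) \<and>
    a + inverse a + 1 \<noteq> a * (1 + b + b ^ 3 + b ^ 4) + inverse a * (b ^ 2 + b ^ 3 + b ^ 4) \<and>
    a + inverse a + 1 \<noteq> 0"
proof -
  define q where "q = (2::nat) ^ f"
  have f2: "2 \<le> f"
  proof (rule ccontr)
    assume "\<not> 2 \<le> f" then have "f \<le> 1" by simp
    then have "(2::nat) ^ f \<le> 2 ^ 1" by (rule power_increasing) simp
    with q4 show False by simp
  qed
  have q4': "4 \<le> q" using q4 q_def by simp
  have cardq: "card (UNIV::'a set) = q * q" using card q_def by (simp add: power2_eq_square)
  have card2: "card (UNIV::'a set) = 2 ^ (2 * f)" using card by (metis power_mult mult.commute)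
  have two: "(2::'a) = 0"
    by (rule char2[OF card2]) (use f2 in simp)
  have neg: "\<And>x::'a. - x = x"
  proof -
    fix x :: 'a
    have "x + x = 2 * x" by simp
    then have "x + x = 0" using two by simp
    then show "- x = x" by (rule minus_unique)
  qed
  have frob: "\<And>x y::'a. (x + y) ^ q = x ^ q + y ^ q" unfolding q_def using frob2[OF two] .
  have bq: "b ^ q = 1 + b"
  proof -
    have "b ^ q = 1 - b" using btr q_def by (simp add: eq_diff_eq add.commute)
    also have "\<dots> = 1 + b" using neg[of b] by simp
    finally show ?thesis .
  qed
  define c where "c = 1 + b + b^2"
  have sq_q: "\<And>x::'a. (x^2)^q = (x^q)^2" by (simp add: power_mult[symmetric] mult.commute)
  have cq: "c ^ q = c"
  proof -
    have "c ^ q = 1 + b^q + (b^q)^2" unfolding c_def using frob sq_q by simp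
    also have "\<dots> = 1 + (1+b) + (1+b)^2" using bq by simp
    also have "\<dots> = c + 2 * (1 + b)" unfolding c_def by (simp add: algebra_simps power2_eq_square)
    also have "\<dots> = c" using two by simp
    finally show ?thesis .
  qed
  have b1: "1 + b \<noteq> 0"
  proof
    assume "1 + b = 0"
    then have "b ^ q = 0" using bq by simp
    then show False using b0 by simp
  qed
  have d_eq: "b * (1 + b) = c - 1" unfolding c_def by (simp add: algebra_simps power2_eq_square)
  have c0: "c \<noteq> 0"
  proof
    assume "c = 0"
    have "b ^ (q + 1) = b * (1 + b)" using bq by simp
    also have "\<dots> = c - 1" by (rule d_eq)
    also have "\<dots> = 1" using \<open>c = 0\<close> neg[of 1] by simp
    finally show False using bn q_def by simp
  qed
  have cpow: "\<And>k. c ^ (2 ^ (k * f)) = c"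
  proof -
    fix k show "c ^ (2 ^ (k * f)) = c"
    proof (induction k)
      case 0 show ?case by simp
    next
      case (Suc k)
      have "c ^ (2 ^ (Suc k * f)) = (c ^ q) ^ (2 ^ (k * f))" by (simp add: q_def power_add power_mult)
      then show ?case using cq Suc.IH by simp
    qed
  qed
  define I where "I = {0, f, 2 * f div gcd 3 f, 4 * f div gcd 3 f}"
  define A where "A = 1 + b + b ^ 3 + b ^ 4"
  define B where "B = b ^ 2 + b ^ 3 + b ^ 4"
  define Good where "Good a \<longleftrightarrow> (\<forall>i\<in>I. c^(2^i) \<noteq> a + inverse a + 1) \<and>
      (\<forall>i\<in>I. c^(2^i) \<noteq> a*A + inverse a * B) \<and> a + inverse a + 1 \<noteq> a*A + inverse a*B" for a
  have final: "\<exists>a::'a. a \<noteq> 0 \<and> mult_order a = q + 1 \<and> Good a \<and> a + inverse a + 1 \<noteq> 0"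
    if "a \<noteq> 0" "mult_order a = q + 1" "Good a" for a
  proof -
    have "a + inverse a + 1 \<noteq> 0"
    proof
      assume z: "a + inverse a + 1 = 0"
      have "a * (a + inverse a + 1) = a^2 + a + 1" using \<open>a \<noteq> 0\<close> by (simp add: algebra_simps power2_eq_square)
      then have "a^2 + a + 1 = 0" using z by simp
      moreover have "a^3 - 1 = (a - 1) * (a^2 + a + 1)" by (simp add: algebra_simps power2_eq_square power3_eq_cube)
      ultimately have "a^3 = 1" by simp
      then have "mult_order a \<le> 3" by (intro mult_order_le) auto
      then show False using that(2) q4' by simp
    qed
    then show ?thesis using that by blast
  qed
  have main: "\<exists>a::'a. a \<noteq> 0 \<and> mult_order a = q + 1 \<and> Good a"
  proof (cases "f \<le> 3")
    case True
    define a where "a = b / (1 + b)"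
    have a0: "a \<noteq> 0" using b0 b1 by (simp add: a_def)
    have inva: "inverse a = (1 + b) / b" by (simp add: a_def)
    have aq: "a ^ q = inverse a"
    proof -
      have "a ^ q = b ^ q / (1 + b) ^ q" by (simp add: a_def power_divide)
      also have "(1 + b) ^ q = 1 + b ^ q" using frob[of 1 b] by simp
      also have "1 + b ^ q = b"
      proof -
        have "1 + b ^ q = 2 + b" using bq by simp
        then show ?thesis using two by simp
      qed
      finally show ?thesis using bq inva by simp
    qed
    have aq1: "a ^ (q + 1) = 1" using aq a0 by simp
    have a_ne1: "a \<noteq> 1"
    proof
      assume "a = 1"
      then have "b = 1 + b" using b1 by (simp add: a_def divide_eq_eq)
      then show False by simp
    qed
    have bb1: "b * (1 + b) \<noteq> 0" using b0 b1 by simp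
    moreover have "b * (1 + b) = b + b * b" by (simp add: algebra_simps)
    ultimately have bb: "b * (1 + b) \<noteq> 0" "b + b * b \<noteq> 0" by simp_all
    define e where "e = c - 1"
    have e0: "e \<noteq> 0" using d_eq b0 b1 e_def by auto
    have s1: "a + inverse a + 1 = c / e"
    proof -
      have "a + inverse a + 1 = (b*b + (1+b)*(1+b) + b*(1+b)) / (b*(1+b))"
        using b0 b1 bb by (simp add: a_def field_simps)
      also have "b*b + (1+b)*(1+b) + b*(1+b) = c + 2*(b^2+b)" by (simp add: c_def algebra_simps power2_eq_square)
      finally show ?thesis using two d_eq e_def by simp
    qed
    have s2: "a*A + inverse a*B = 0"
    proof -
      have "a*A + inverse a*B = (b*b*A + (1+b)*(1+b)*B) / (b*(1+b))"
        using b0 b1 bb by (simp add: a_def field_simps)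
      also have "b*b*A + (1+b)*(1+b)*B = 2 * (b^2 + 2*b^3 + 2*b^4 + 2*b^5 + b^6)"
        unfolding A_def B_def by (Groebner_Basis.algebra)
      finally show ?thesis using two by simp
    qed
    have key: "\<forall>i\<in>I. c^(2^i) \<noteq> c / e" and ord: "mult_order a = q + 1"
    proof -
      have "f = 2 \<or> f = 3" using True f2 by auto
      then have "(\<forall>i\<in>I. c^(2^i) \<noteq> c / e) \<and> mult_order a = q + 1"
      proof
        assume f: "f = 2"
        have Ieq: "I = {0 * f, 1 * f, 2 * f, 4 * f}" using f by (simp add: I_def)
        have "c \<noteq> c / e"
        proof
          assume "c = c / e"
          then have "e = 1" using c0 e0 by (simp add: eq_divide_eq)
          then have "c = 2" using e_def by simp
          then show False using c0 two by simp
        qed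
        then have k: "\<forall>i\<in>I. c^(2^i) \<noteq> c / e" unfolding Ieq using cpow[of 0] cpow[of 1] cpow[of 2] cpow[of 4] by auto
        have "mult_order a = 5"
        proof (rule mult_order_eqI)
          fix m
          have a5: "a ^ 5 = 1" using aq1 f q_def by simp
          show "a ^ m = 1 \<longleftrightarrow> 5 dvd m"
          proof
            assume "a ^ m = 1"
            then have g: "a ^ gcd m 5 = 1" using pow_gcd_one a5 by blast
            have "gcd m 5 dvd 5" by simp
            moreover have "prime (5::nat)" by simp
            ultimately have "gcd m 5 = 1 \<or> gcd m 5 = 5" by (simp add: prime_nat_iff)
            then show "5 dvd m" using g a_ne1 by (metis gcd_dvd1 power_one_right)
          next
            assume "5 dvd m"
            then obtain k where "m = 5 * k" by blast
            then show "a ^ m = 1" using a5 by (simp add: power_mult)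
          qed
        qed simp
        then show ?thesis using k f q_def by simp
      next
        assume f: "f = 3"
        have Ieq: "I = {0, 3, 2, 4}" using f by (simp add: I_def)
        have c8: "c ^ 8 = c" using cq f q_def by simp
        have ee: "e = c + 1" using e_def neg[of 1] by simp
        have k1: "c \<noteq> c / e"
        proof
          assume "c = c / e"
          then have "e = 1" using c0 e0 by (simp add: eq_divide_eq)
          then have "c = 2" using e_def by simp
          then show False using c0 two by simp
        qed
        have k2: "c ^ 2 \<noteq> c / e"
        proof
          assume "c ^ 2 = c / e"
          then have "c ^ 2 * e = c" using e0 by (simp add: eq_divide_eq)
          then have "c * (c * e) = c * 1" by (simp add: power2_eq_square algebra_simps)
          then have "c * e = 1" using c0 by simp
          then have "c^2 + c + 1 = 2" using ee by (simp add: power2_eq_square algebra_simps)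
          then have z: "c^2 + c + 1 = 0" using two by simp
          have "c^3 - 1 = (c - 1) * (c^2 + c + 1)" by (Groebner_Basis.algebra)
          then have c3: "c ^ 3 = 1" using z by simp
          have "c ^ 8 = c ^ 3 * c ^ 3 * c ^ 2" by (simp add: power_add[symmetric])
          then have "c ^ 2 = c" using c3 c8 by simp
          then have "c * c = c * 1" by (simp add: power2_eq_square)
          then have "c = 1" using c0 by simp
          then show False using \<open>c * e = 1\<close> ee two by simp
        qed
        have k4: "c ^ 4 \<noteq> c / e"
        proof
          assume "c ^ 4 = c / e"
          then have "c ^ 4 * e = c" using e0 by (simp add: eq_divide_eq)
          moreover have "c * (c ^ 3 * e) = c ^ 4 * e" by (simp add: power3_eq_cube power4_eq_xxxx algebra_simps)
          ultimately have "c * (c ^ 3 * e) = c * 1" by simp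
          then have "c ^ 3 * e = 1" using c0 by simp
          moreover have "c ^ 3 * e = c ^ 4 + c ^ 3" using ee by (simp add: power3_eq_cube power4_eq_xxxx algebra_simps)
          ultimately have "c ^ 4 = 1 - c ^ 3" by (simp add: eq_diff_eq)
          then have c4: "c ^ 4 = c ^ 3 + 1" using neg[of "c^3"] by simp
          have "c ^ 8 = c^3 + c^2 + c + 2 * (c^3 + 1)" using c4 by (Groebner_Basis.algebra)
          then have "c = c^3 + c^2 + c" using c8 two by simp
          then have "c^2 * (c + 1) = 0" by (simp add: algebra_simps power2_eq_square power3_eq_cube)
          then have "c + 1 = 0" using c0 by simp
          then have "c = - 1" by (metis add.commute add_eq_0_iff)
          then have "c = 1" using neg[of 1] by simp
          then show False using c4 two by simp
        qed
        have c16: "c ^ 16 = c ^ 2"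
        proof -
          have "c ^ 16 = (c ^ 8) ^ 2" by (simp add: power_mult[symmetric])
          then show ?thesis using c8 by simp
        qed
        have k: "\<forall>i\<in>I. c^(2^i) \<noteq> c / e" unfolding Ieq using k1 k2 k4 c8 c16 by auto
        have a3: "a ^ 3 \<noteq> 1"
        proof
          assume "a ^ 3 = 1"
          moreover have "a^3 - 1 = (a - 1) * (a^2 + a + 1)" by (Groebner_Basis.algebra)
          ultimately have "a^2 + a + 1 = 0" using a_ne1 by simp
          moreover have "a * (a + inverse a + 1) = a^2 + a + 1" using a0 by (simp add: algebra_simps power2_eq_square)
          ultimately have "a + inverse a + 1 = 0" using a0 by simp
          then show False using s1 c0 e0 by simp
        qed
        have "mult_order a = 9"
        proof (rule mult_order_eqI)
          fix m
          have a9: "a ^ 9 = 1" using aq1 f q_def by simp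
          show "a ^ m = 1 \<longleftrightarrow> 9 dvd m"
          proof
            assume "a ^ m = 1"
            then have g: "a ^ gcd m 9 = 1" using pow_gcd_one a9 by blast
            have dv: "gcd m 9 dvd 3 ^ 2" by simp
            have "(gcd m 9 dvd 3 ^ 2) = (\<exists>j\<le>2. gcd m 9 = 3 ^ j)" by (rule divides_primepow_nat) simp
            with dv obtain j where "j \<le> 2" "gcd m 9 = 3 ^ j" by blast
            then have "gcd m 9 = 1 \<or> gcd m 9 = 3 \<or> gcd m 9 = 9"
              by (cases j; cases "j - 1"; auto)
            then show "9 dvd m" using g a_ne1 a3 by (metis gcd_dvd1 power_one_right)
          next
            assume "9 dvd m"
            then obtain k where "m = 9 * k" by blast
            then show "a ^ m = 1" using a9 by (simp add: power_mult)
          qed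
        qed simp
        then show ?thesis using k f q_def by simp
      qed
      then show "\<forall>i\<in>I. c^(2^i) \<noteq> c / e" "mult_order a = q + 1" by auto
    qed
    have "Good a" unfolding Good_def using key s1 s2 c0 e0 by (auto simp: divide_eq_0_iff)
    then show ?thesis using a0 ord by blast
  next
    case False
    then have f4: "4 \<le> f" by simp
    have q16: "16 \<le> q" using power_increasing[OF f4, of "2::nat"] q_def by simp
    have qq: "q \<le> q * q" by simp
    define N where "N = q * q - 1"
    have Npos: "0 < N" using q16 qq unfolding N_def by linarith
    have cardN: "card (UNIV - {0::'a}) = N" using cardq by (simp add: card_Diff_singleton N_def)
    obtain g :: 'a where gg: "\<And>x. x \<noteq> 0 \<Longrightarrow> \<exists>i. x = g ^ i" using gen_exists by blast
    have g0: "g \<noteq> 0"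
    proof
      assume "g = 0"
      have "UNIV \<subseteq> {0, 1::'a}"
      proof
        fix x :: 'a
        show "x \<in> {0, 1}"
        proof (cases "x = 0")
          case False
          then obtain i where "x = g ^ i" using gg by blast
          then show ?thesis using \<open>g = 0\<close> by (simp add: power_0_left)
        qed simp
      qed
      then have "card (UNIV::'a set) \<le> card {0, 1::'a}" by (intro card_mono) auto
      also have "\<dots> \<le> 2" by (simp add: card_insert_if)
      finally show False using cardq q16 qq by linarith
    qed
    have gNN: "g ^ N = 1" using fermat[OF g0] cardq N_def by simp
    have gN: "g ^ m = 1 \<longleftrightarrow> N dvd m" for m
    proof
      assume "N dvd m"
      then obtain k where "m = N * k" by blast
      then show "g ^ m = 1" using gNN by (simp add: power_mult)
    next
      assume gm: "g ^ m = 1"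
      define r where "r = m mod N"
      have "g ^ m = g ^ (N * (m div N) + r)" by (simp add: r_def)
      also have "\<dots> = (g ^ N) ^ (m div N) * g ^ r" by (simp add: power_add power_mult)
      finally have gr: "g ^ r = 1" using gm gNN by simp
      show "N dvd m"
      proof (rule ccontr)
        assume "\<not> N dvd m"
        then have r0: "0 < r" using r_def by (simp add: dvd_eq_mod_eq_0)
        have "UNIV - {0} \<subseteq> (\<lambda>i. g ^ i) ` {..<r}"
        proof
          fix x :: 'a assume "x \<in> UNIV - {0}"
          then obtain i where xi: "x = g ^ i" using gg by auto
          have "g ^ i = g ^ (r * (i div r) + i mod r)" by simp
          also have "\<dots> = (g ^ r) ^ (i div r) * g ^ (i mod r)" by (simp only: power_add power_mult)
          finally have "x = g ^ (i mod r)" using gr xi by simp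
          then show "x \<in> (\<lambda>i. g ^ i) ` {..<r}" using r0 by auto
        qed
        then have "card (UNIV - {0::'a}) \<le> card ((\<lambda>i. g ^ i) ` {..<r})" by (intro card_mono) auto
        also have "\<dots> \<le> r" using card_image_le[of "{..<r}" "\<lambda>i. g ^ i"] by simp
        finally have "N \<le> r" using cardN by simp
        moreover have "r < N" using r_def Npos by simp
        ultimately show False by simp
      qed
    qed
    define n where "n = q + 1"
    have npos: "0 < n" by (simp add: n_def)
    have Nqn: "N = (q - 1) * n"
    proof -
      obtain k where "q = Suc k" using q16 by (cases q) auto
      then show ?thesis by (simp add: N_def n_def algebra_simps)
    qed
    define h where "h = g ^ (q - 1)"
    have h0: "h \<noteq> 0" using g0 h_def by simp
    have hn: "h ^ m = 1 \<longleftrightarrow> n dvd m" for m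
    proof -
      have "h ^ m = g ^ ((q - 1) * m)" by (simp add: h_def power_mult)
      then have "h ^ m = 1 \<longleftrightarrow> (q - 1) * n dvd (q - 1) * m" using gN Nqn by simp
      also have "\<dots> \<longleftrightarrow> n dvd m" using q16 by (intro nat_mult_dvd_cancel1) simp
      finally show ?thesis .
    qed
    have ordk: "mult_order (h ^ k) = n" if k: "k \<in> totatives n" for k
    proof (rule mult_order_eqI[OF npos])
      fix m
      have cop: "coprime n k" using k by (simp add: in_totatives_iff coprime_commute)
      have "(h ^ k) ^ m = h ^ (k * m)" by (simp add: power_mult)
      then have "(h ^ k) ^ m = 1 \<longleftrightarrow> n dvd k * m" using hn[of "k * m"] by simp
      also have "\<dots> \<longleftrightarrow> n dvd m" using cop by (rule coprime_dvd_mult_right_iff)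
      finally show "(h ^ k) ^ m = 1 \<longleftrightarrow> n dvd m" .
    qed
    have dlem: False if kl: "k < l" "k \<in> totatives n" "l \<in> totatives n" "h ^ k = h ^ l" for k l
    proof -
      have "h ^ l = h ^ k * h ^ (l - k)" using kl(1) by (simp add: power_add[symmetric])
      then have "h ^ (l - k) = 1" using kl(4) h0 by simp
      then have "n dvd (l - k)" using hn by simp
      moreover have "0 < l - k" "l - k < n" using kl by (auto simp: in_totatives_iff)
      ultimately show False by (simp add: nat_dvd_not_less)
    qed
    have inj: "inj_on (\<lambda>k. h ^ k) (totatives n)"
    proof (rule inj_onI)
      fix k l assume k: "k \<in> totatives n" and l: "l \<in> totatives n" and e: "h ^ k = h ^ l"
      show "k = l"
      proof (rule ccontr)
        assume "k \<noteq> l"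
        then consider "k < l" | "l < k" by linarith
        then show False
        proof cases
          case 1 then show False using dlem k l e by blast
        next
          case 2 then show False using dlem k l e by metis
        qed
      qed
    qed
    define G where "G = {x::'a. mult_order x = n}"
    have "(\<lambda>k. h ^ k) ` totatives n \<subseteq> G" using ordk by (auto simp: G_def)
    then have "card ((\<lambda>k. h ^ k) ` totatives n) \<le> card G" by (intro card_mono) auto
    then have cardG: "totient n \<le> card G" using inj by (simp add: card_image totient_def)
    define S where "S = (\<lambda>i. c ^ (2 ^ i)) ` I"
    define Bad where "Bad = (\<Union>s\<in>S. QR 1 (1 - s) 1 \<union> QR A (- s) B) \<union> QR (1 - A) 1 (1 - B)"
    have Sne0: "s \<noteq> 0" if "s \<in> S" for s using c0 that by (auto simp: S_def)
    have cf: "c ^ (2 ^ f) = c" using cq q_def by simp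
    have Seq: "S = {c, c ^ (2 ^ (2 * f div gcd 3 f)), c ^ (2 ^ (4 * f div gcd 3 f))}"
      using cf by (auto simp: S_def I_def)
    have cardS: "card S \<le> 3" unfolding Seq by (simp add: card_insert_if)
    have cardS1: "card S \<le> 1" if "gcd 3 f = 1"
    proof -
      have "S = {c}" unfolding Seq using that cpow[of 2] cpow[of 4] by (simp add: mult.commute)
      then show ?thesis by simp
    qed
    have finS: "finite S" by (simp add: S_def I_def)
    have cardBad: "card Bad \<le> 4 * card S + 2"
    proof -
      have "card (\<Union>s\<in>S. QR 1 (1 - s) 1 \<union> QR A (- s) B) \<le> (\<Sum>s\<in>S. card (QR 1 (1 - s) 1 \<union> QR A (- s) B))"
        using finS by (rule card_UN_le)
      also have "\<dots> \<le> (\<Sum>s\<in>S. 4)"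
      proof (rule sum_mono)
        fix s assume "s \<in> S"
        then have "- s \<noteq> 0" using Sne0 by simp
        have "card (QR 1 (1 - s) 1 \<union> QR A (- s) B) \<le> card (QR 1 (1 - s) 1) + card (QR A (- s) B)"
          by (rule card_Un_le)
        also have "\<dots> \<le> 2 + 2" using QR_card[of 1 "1 - s" 1] QR_card[of A "- s" B] \<open>- s \<noteq> 0\<close>
          by (intro add_mono) auto
        finally show "card (QR 1 (1 - s) 1 \<union> QR A (- s) B) \<le> 4" by simp
      qed
      also have "\<dots> = 4 * card S" by simp
      finally have u: "card (\<Union>s\<in>S. QR 1 (1 - s) 1 \<union> QR A (- s) B) \<le> 4 * card S" .
      have "card Bad \<le> card (\<Union>s\<in>S. QR 1 (1 - s) 1 \<union> QR A (- s) B) + card (QR (1 - A) 1 (1 - B))"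
        unfolding Bad_def by (rule card_Un_le)
      also have "\<dots> \<le> 4 * card S + 2" using u QR_card[of "1 - A" 1 "1 - B"] by (intro add_mono) auto
      finally show ?thesis .
    qed
    have ntot: "2 * f \<le> totient n" using totient_lb[of f] f4 n_def q_def by simp
    have lt: "card Bad < totient n"
    proof -
      have "gcd 3 f dvd 3" by simp
      moreover have "prime (3::nat)" by simp
      ultimately have "gcd 3 f = 1 \<or> gcd 3 f = 3" by (simp add: prime_nat_iff)
      then show ?thesis
      proof
        assume "gcd 3 f = 1"
        then show ?thesis using cardS1 cardBad ntot f4 by simp
      next
        assume g3: "gcd 3 f = 3"
        then have "3 dvd f" by (metis gcd_dvd2)
        then obtain k where k: "f = 3 * k" by blast
        show ?thesis
        proof (cases "k = 2")
          case True
          then have "n = 65" using k n_def q_def by simp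
          moreover have "totient (5 * 13) = totient 5 * totient 13"
            by (rule totient_mult_coprime) (simp add: primes_coprime)
          ultimately have "totient n = 48" by (simp add: totient_prime)
          then show ?thesis using cardS cardBad by simp
        next
          case False
          then have "3 \<le> k" using k f4 by simp
          then have "18 \<le> totient n" using ntot k by simp
          then show ?thesis using cardS cardBad by simp
        qed
      qed
    qed
    have "\<not> G \<subseteq> Bad"
    proof
      assume "G \<subseteq> Bad"
      then have "card G \<le> card Bad" by (intro card_mono) auto
      then show False using lt cardG by simp
    qed
    then obtain a where aG: "a \<in> G" and aB: "a \<notin> Bad" by blast
    have ord: "mult_order a = q + 1" using aG by (simp add: G_def n_def)
    have a0: "a \<noteq> 0"
    proof
      assume "a = 0"
      then have "mult_order a = 0" by (simp add: mult_order_def power_0_left)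
      then show False using ord by simp
    qed
    have ainv: "a * inverse a = 1" using a0 by simp
    have "Good a" unfolding Good_def
    proof (intro conjI ballI)
      fix i assume "i \<in> I"
      then have sS: "c ^ (2 ^ i) \<in> S" by (simp add: S_def)
      show "c ^ (2 ^ i) \<noteq> a + inverse a + 1"
      proof
        assume e: "c ^ (2 ^ i) = a + inverse a + 1"
        have "1 * a ^ 2 + (1 - c ^ (2 ^ i)) * a + 1 = a * (a + inverse a + 1 - c ^ (2 ^ i))"
          using ainv by (simp add: algebra_simps power2_eq_square)
        also have "\<dots> = 0" using e by simp
        finally have "a \<in> QR 1 (1 - c ^ (2 ^ i)) 1" by (simp add: QR_def)
        then show False using aB sS by (auto simp: Bad_def)
      qed
      show "c ^ (2 ^ i) \<noteq> a * A + inverse a * B"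
      proof
        assume e: "c ^ (2 ^ i) = a * A + inverse a * B"
        have "A * a ^ 2 + (- (c ^ (2 ^ i))) * a + B = a * (a * A + inverse a * B - c ^ (2 ^ i))"
          using ainv by (simp add: algebra_simps power2_eq_square)
        also have "\<dots> = 0" using e by simp
        finally have "a \<in> QR A (- (c ^ (2 ^ i))) B" by (simp add: QR_def)
        then show False using aB sS by (auto simp: Bad_def)
      qed
    next
      show "a + inverse a + 1 \<noteq> a * A + inverse a * B"
      proof
        assume e: "a + inverse a + 1 = a * A + inverse a * B"
        have "(1 - A) * a ^ 2 + 1 * a + (1 - B) = a * ((a + inverse a + 1) - (a * A + inverse a * B))"
          using ainv by (simp add: algebra_simps power2_eq_square)
        also have "\<dots> = 0" using e by simp
        finally have "a \<in> QR (1 - A) 1 (1 - B)" by (simp add: QR_def)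
        then show False using aB by (auto simp: Bad_def)
      qed
    qed
    then show ?thesis using a0 ord by blast
  qed
  show ?thesis using main final unfolding Good_def I_def A_def B_def c_def q_def by blast
qed

end
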